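(* Let $0<\alpha<\varepsilon<1$ be constants, let $c=(1+\varepsilon)n$ and $\frac{\log n}{n}\le p\le\frac{2\log n}{n}$. Then with probability $1-o(1)$ the graph $G\sim\mathcal G_c(n,p)$ has the following property: for every $\mathcal C^*\subseteq[c]$ with $|\mathcal C^*|\ge(1+\alpha)n$, the graph $G[[n];\mathcal C^*]$ is $k$-rainbow-pseudorandom for $k=\frac{n}{\log^{0.49}n}$.
   Context: $\mathcal G_c(n,p)$: random graph on $[n]$, each pair an edge independently with probability $p$, each edge colored uniformly and independently from $[c]$. $G[[n];\mathcal C^*]$ is the spanning subgraph of $G$ consisting of the edges with color in $\mathcal C^*$. An edge-colored graph on $n$ vertices is $k$-rainbow-pseudorandom if for every two disjoint vertex sets $A,B$ with $|A|=|B|=k$, the number of distinct colors on the edges between $A$ and $B$ is at least $n$. Asymptotics as $n\to\infty$. *)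

theory Defs
  imports "HOL-Probability.Probability"
begin

text \<open>An edge-coloured graph on vertex set [n] = {1..n} is encoded as a function
  on ordered pairs (i,j) with i < j: None = no edge, Some x = edge of colour x.\<close>

definition vpairs :: "nat \<Rightarrow> (nat \<times> nat) set" where
  "vpairs n = {(i,j). 1 \<le> i \<and> i < j \<and> j \<le> n}"

definition edge_pmf :: "real \<Rightarrow> nat \<Rightarrow> nat option pmf" where
  "edge_pmf p c = bind_pmf (bernoulli_pmf p)
     (\<lambda>b. if b then map_pmf Some (pmf_of_set {1..c}) else return_pmf None)"

definition Gc :: "nat \<Rightarrow> real \<Rightarrow> nat \<Rightarrow> (nat \<times> nat \<Rightarrow> nat option) pmf" where
  "Gc n p c = Pi_pmf (vpairs n) None (\<lambda>_. edge_pmf p c)"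

definition ecol :: "(nat \<times> nat \<Rightarrow> nat option) \<Rightarrow> nat \<Rightarrow> nat \<Rightarrow> nat option" where
  "ecol G a b = G (min a b, max a b)"

definition restrict_colours :: "nat set \<Rightarrow> (nat \<times> nat \<Rightarrow> nat option) \<Rightarrow> (nat \<times> nat \<Rightarrow> nat option)" where
  "restrict_colours C G = (\<lambda>e. case G e of None \<Rightarrow> None | Some x \<Rightarrow> if x \<in> C then Some x else None)"

definition colours_between :: "(nat \<times> nat \<Rightarrow> nat option) \<Rightarrow> nat set \<Rightarrow> nat set \<Rightarrow> nat set" where
  "colours_between G A B = {x. \<exists>a\<in>A. \<exists>b\<in>B. ecol G a b = Some x}"

definition rainbow_pseudorandom :: "nat \<Rightarrow> nat \<Rightarrow> (nat \<times> nat \<Rightarrow> nat option) \<Rightarrow> bool" where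
  "rainbow_pseudorandom n k G \<longleftrightarrow>
     (\<forall>A B. A \<subseteq> {1..n} \<longrightarrow> B \<subseteq> {1..n} \<longrightarrow> A \<inter> B = {} \<longrightarrow> card A = k \<longrightarrow> card B = k
        \<longrightarrow> card (colours_between G A B) \<ge> n)"

end

theory Submission imports Defs "HOL-Real_Asymp.Real_Asymp" begin

lemma pmf_edge_Some:
  assumes "0 \<le> p" "p \<le> 1" "c \<ge> 1" "x \<in> {1..c}"
  shows "pmf (edge_pmf p c) (Some x) = p / c"
proof -
  have "pmf (map_pmf Some (pmf_of_set {1..c})) (Some x) = pmf (pmf_of_set {1..c}) x"
    by (rule pmf_map_inj') auto
  also have "\<dots> = 1 / c" using assms by simp
  finally show ?thesis using assms
    by (simp add: edge_pmf_def pmf_bind)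
qed

lemma prob_edge_avoid:
  assumes "0 \<le> p" "p \<le> 1" "c \<ge> 1" "M \<subseteq> {1..c}"
  shows "measure_pmf.prob (edge_pmf p c) (- (Some ` M)) = 1 - p * card M / c"
proof -
  have fin: "finite M" using assms finite_subset by blast
  have "measure_pmf.prob (edge_pmf p c) (Some ` M) = sum (pmf (edge_pmf p c)) (Some ` M)"
    using fin by (simp add: measure_measure_pmf_finite)
  also have "\<dots> = sum (\<lambda>x. pmf (edge_pmf p c) (Some x)) M"
    by (subst sum.reindex) (auto simp: inj_on_def)
  also have "\<dots> = sum (\<lambda>x. p / c) M"
    using assms by (intro sum.cong refl pmf_edge_Some) auto
  also have "\<dots> = p * card M / c" by simp
  finally have "measure_pmf.prob (edge_pmf p c) (Some ` M) = p * card M / c" .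
  then show ?thesis
    using measure_pmf.prob_compl[of "Some ` M" "edge_pmf p c"] by (simp add: Compl_eq_Diff_UNIV)
qed

lemma finite_vpairs: "finite (vpairs n)"
  by (rule finite_subset[of _ "{1..n} \<times> {1..n}"]) (auto simp: vpairs_def)

lemma prob_avoid:
  assumes "0 \<le> p" "p \<le> 1" "c \<ge> 1" "M \<subseteq> {1..c}"
    and AB: "A \<subseteq> {1..n}" "B \<subseteq> {1..n}" "A \<inter> B = {}"
  shows "measure_pmf.prob (Gc n p c) {G. \<forall>a\<in>A. \<forall>b\<in>B. ecol G a b \<notin> Some ` M}
       = (1 - p * card M / c) ^ (card A * card B)"
proof -
  define P where "P = (\<lambda>(a,b). (min a b, max a b)) ` (A \<times> B)"
  have finA: "finite A" and finB: "finite B" using AB finite_subset by blast+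
  have inj: "inj_on (\<lambda>(a,b). (min a b, max a b)) (A \<times> B)"
    using AB(3) by (auto simp: inj_on_def min_def max_def split: if_splits)
  have cardP: "card P = card A * card B"
    unfolding P_def by (subst card_image[OF inj]) (simp add: card_cartesian_product)
  have Psub: "P \<subseteq> vpairs n"
  proof
    fix e assume "e \<in> P"
    then obtain a b where ab: "a \<in> A" "b \<in> B" "e = (min a b, max a b)" by (auto simp: P_def)
    have "a \<noteq> b" using ab AB(3) by blast
    moreover have "1 \<le> a" "a \<le> n" "1 \<le> b" "b \<le> n" using ab AB by auto
    ultimately show "e \<in> vpairs n" using ab(3) by (auto simp: vpairs_def min_def max_def)
  qed
  have ev: "{G. \<forall>a\<in>A. \<forall>b\<in>B. ecol G a b \<notin> Some ` M}
        = Pi (vpairs n) (\<lambda>e. if e \<in> P then - (Some ` M) else UNIV)"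
  proof (intro set_eqI iffI)
    fix G assume G: "G \<in> {G. \<forall>a\<in>A. \<forall>b\<in>B. ecol G a b \<notin> Some ` M}"
    show "G \<in> Pi (vpairs n) (\<lambda>e. if e \<in> P then - (Some ` M) else UNIV)"
      using G by (fastforce simp: P_def ecol_def)
  next
    fix G assume G: "G \<in> Pi (vpairs n) (\<lambda>e. if e \<in> P then - (Some ` M) else UNIV)"
    show "G \<in> {G. \<forall>a\<in>A. \<forall>b\<in>B. ecol G a b \<notin> Some ` M}"
    proof (safe)
      fix a b x assume "a \<in> A" "b \<in> B" "ecol G a b = Some x" "x \<in> M"
      moreover have "(min a b, max a b) \<in> P" using \<open>a \<in> A\<close> \<open>b \<in> B\<close> by (auto simp: P_def)
      moreover have "(min a b, max a b) \<in> vpairs n" using calculation Psub by auto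
      ultimately show False using G by (force simp: ecol_def)
    qed
  qed
  have "measure_pmf.prob (Gc n p c) {G. \<forall>a\<in>A. \<forall>b\<in>B. ecol G a b \<notin> Some ` M}
      = (\<Prod>e\<in>vpairs n. measure_pmf.prob (edge_pmf p c) (if e \<in> P then - (Some ` M) else UNIV))"
    unfolding ev Gc_def by (rule measure_Pi_pmf_Pi[OF finite_vpairs])
  also have "\<dots> = (\<Prod>e\<in>vpairs n. if e \<in> P then 1 - p * card M / c else 1)"
    using assms by (intro prod.cong refl) (simp add: prob_edge_avoid)
  also have "\<dots> = (\<Prod>e\<in>vpairs n \<inter> P. 1 - p * card M / c)"
    by (rule prod.inter_restrict[OF finite_vpairs, symmetric])
  also have "vpairs n \<inter> P = P" using Psub by blast
  finally show ?thesis by (simp add: cardP)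
qed

lemma colours_restrict: "colours_between (restrict_colours C G) A B = colours_between G A B \<inter> C"
proof -
  have *: "\<And>z x. ((case z of None \<Rightarrow> None | Some y \<Rightarrow> if y \<in> C then Some y else None) = Some x)
      \<longleftrightarrow> (z = Some x \<and> x \<in> C)" for C :: "nat set"
    by (auto split: option.splits)
  show ?thesis unfolding colours_between_def ecol_def restrict_colours_def * by blast
qed

lemma bad_subset:
  fixes a :: real
  assumes "C \<subseteq> {1..c}" "real (card C) \<ge> (1 + a) * n"
    and "\<not> rainbow_pseudorandom n k (restrict_colours C G)"
  shows "\<exists>A B M. A \<in> Pow {1..n} \<and> B \<in> Pow {1..n} \<and> A \<inter> B = {} \<and> card A = k \<and> card B = k
      \<and> M \<in> Pow {1..c} \<and> card M = nat \<lceil>a * n\<rceil> \<and> (\<forall>x\<in>A. \<forall>y\<in>B. ecol G x y \<notin> Some ` M)"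
proof -
  obtain A B where AB: "A \<subseteq> {1..n}" "B \<subseteq> {1..n}" "A \<inter> B = {}" "card A = k" "card B = k"
    and lt0: "\<not> n \<le> card (colours_between (restrict_colours C G) A B)"
    using assms(3) unfolding rainbow_pseudorandom_def by blast
  have lt: "card (colours_between G A B \<inter> C) < n" using lt0 by (simp add: colours_restrict)
  define S where "S = colours_between G A B"
  have finC: "finite C" using assms(1) finite_subset by blast
  have "card (C - S) = card C - card (C \<inter> S)"
    using finC by (simp add: card_Diff_subset_Int)
  moreover have "card (C \<inter> S) \<le> card C" using finC by (simp add: card_mono)
  moreover have "card (C \<inter> S) < n" using lt by (simp add: S_def Int_commute)
  ultimately have "real (card (C - S)) = real (card C) - real (card (C \<inter> S))"
    by (simp add: of_nat_diff)
  moreover have "real (card (C \<inter> S)) < n" using \<open>card (C \<inter> S) < n\<close> by simp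
  ultimately have "real (card (C - S)) > a * n" using assms(2)
    by (simp add: algebra_simps)
  then have "nat \<lceil>a * n\<rceil> \<le> card (C - S)"
    by (simp add: nat_le_iff ceiling_le_iff)
  then obtain M where M: "M \<subseteq> C - S" "card M = nat \<lceil>a * n\<rceil>"
    by (meson obtain_subset_with_card_n)
  have "\<forall>x\<in>A. \<forall>y\<in>B. ecol G x y \<notin> Some ` M"
    using M(1) by (auto simp: S_def colours_between_def)
  moreover have "M \<in> Pow {1..c}" using M(1) assms(1) by auto
  moreover have "A \<in> Pow {1..n}" "B \<in> Pow {1..n}" using AB by auto
  ultimately show ?thesis using AB M(2) by (intro exI[of _ A] exI[of _ B] exI[of _ M]) simp
qed

lemma single_bound:
  fixes p :: real
  assumes "0 \<le> p" "p \<le> 1" "c \<ge> 1" "M \<subseteq> {1..c}" "card M = m"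
    and AB: "A \<subseteq> {1..n}" "B \<subseteq> {1..n}" "A \<inter> B = {}" "card A = k" "card B = k"
  shows "measure_pmf.prob (Gc n p c) {G. \<forall>a\<in>A. \<forall>b\<in>B. ecol G a b \<notin> Some ` M}
       \<le> exp (-(p * m / c) * (k * k))"
proof -
  have "m \<le> c" using assms(4,5) card_mono[of "{1..c}" M] by auto
  then have "p * real m \<le> 1 * real c" using assms(1,2) by (intro mult_mono) auto
  then have q0: "0 \<le> 1 - p * m / c" using assms(3) by (simp add: field_simps)
  have "measure_pmf.prob (Gc n p c) {G. \<forall>a\<in>A. \<forall>b\<in>B. ecol G a b \<notin> Some ` M}
      = (1 - p * m / c) ^ (k * k)" using prob_avoid[OF assms(1-4) AB(1-3)] AB assms(5) by simp
  also have "\<dots> \<le> exp (-(p * m / c)) ^ (k * k)"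
    using q0 exp_ge_add_one_self[of "-(p * m / c)"] by (intro power_mono) auto
  also have "\<dots> = exp (-(p * m / c) * (k * k))"
    by (subst exp_of_nat_mult[symmetric]) (simp add: algebra_simps)
  finally show ?thesis .
qed

lemma bad_prob:
  fixes a p :: real and n c k :: nat
  assumes "0 \<le> p" "p \<le> 1" "c \<ge> 1"
  shows "measure_pmf.prob (Gc n p c) (- {G. \<forall>C. C \<subseteq> {1..c} \<longrightarrow> real (card C) \<ge> (1 + a) * n \<longrightarrow>
                  rainbow_pseudorandom n k (restrict_colours C G)})
     \<le> 2 ^ (2 * n + c) * exp (-(p * nat \<lceil>a * n\<rceil> / c) * (k * k))"
proof -
  define m where "m = nat \<lceil>a * n\<rceil>"
  define I where "I = {(A,B,M). A \<in> Pow {1..n} \<and> B \<in> Pow {1..n} \<and> A \<inter> B = {} \<and> card A = k \<and> card B = k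
      \<and> M \<in> Pow {1..c} \<and> card M = m}"
  define E where "E = (\<lambda>(A,B,M). {G. \<forall>x\<in>A. \<forall>y\<in>B. ecol G x y \<notin> Some ` M})"
  define bnd where "bnd = exp (-(p * m / c) * (k * k))"
  have Isub: "I \<subseteq> Pow {1..n} \<times> Pow {1..n} \<times> Pow {1..c}" by (auto simp: I_def)
  have finI: "finite I" by (rule finite_subset[OF Isub]) auto
  have cardI: "card I \<le> 2 ^ (2 * n + c)"
  proof -
    have "card I \<le> card (Pow {1..n} \<times> Pow {1..n} \<times> Pow {1..c})"
      by (rule card_mono[OF _ Isub]) auto
    also have "\<dots> = 2 ^ (2 * n + c)"
      by (simp add: card_cartesian_product card_Pow power_add mult_2)
    finally show ?thesis .
  qed
  have sub: "- {G. \<forall>C. C \<subseteq> {1..c} \<longrightarrow> real (card C) \<ge> (1 + a) * n \<longrightarrow>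
                  rainbow_pseudorandom n k (restrict_colours C G)} \<subseteq> \<Union> (E ` I)"
  proof
    fix G assume "G \<in> - {G. \<forall>C. C \<subseteq> {1..c} \<longrightarrow> real (card C) \<ge> (1 + a) * n \<longrightarrow>
                  rainbow_pseudorandom n k (restrict_colours C G)}"
    then obtain C where "C \<subseteq> {1..c}" "real (card C) \<ge> (1 + a) * n"
        "\<not> rainbow_pseudorandom n k (restrict_colours C G)" by blast
    from bad_subset[OF this] obtain A B M where ABM: "A \<in> Pow {1..n}" "B \<in> Pow {1..n}" "A \<inter> B = {}"
       "card A = k" "card B = k" "M \<in> Pow {1..c}" "card M = m"
       "\<forall>x\<in>A. \<forall>y\<in>B. ecol G x y \<notin> Some ` M" unfolding m_def by blast
    then have "(A,B,M) \<in> I" unfolding I_def by simp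
    moreover have "G \<in> E (A,B,M)" using ABM(8) by (simp add: E_def)
    ultimately show "G \<in> \<Union> (E ` I)" by blast
  qed
  have "measure_pmf.prob (Gc n p c) (- {G. \<forall>C. C \<subseteq> {1..c} \<longrightarrow> real (card C) \<ge> (1 + a) * n \<longrightarrow>
                  rainbow_pseudorandom n k (restrict_colours C G)})
      \<le> measure_pmf.prob (Gc n p c) (\<Union> (E ` I))"
    by (rule measure_pmf.finite_measure_mono[OF sub]) simp
  also have "\<dots> \<le> (\<Sum>i\<in>I. measure_pmf.prob (Gc n p c) (E i))"
    by (rule measure_pmf.finite_measure_subadditive_finite[OF finI]) simp
  also have "\<dots> \<le> (\<Sum>i\<in>I. bnd)"
  proof (rule sum_mono)
    fix i assume "i \<in> I"
    then obtain A B M where i: "i = (A,B,M)" "A \<subseteq> {1..n}" "B \<subseteq> {1..n}" "A \<inter> B = {}"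
       "card A = k" "card B = k" "M \<subseteq> {1..c}" "card M = m" unfolding I_def by auto
    show "measure_pmf.prob (Gc n p c) (E i) \<le> bnd"
      unfolding i(1) E_def bnd_def using single_bound[OF assms i(7,8) i(2-6)] by simp
  qed
  also have "\<dots> = card I * bnd" by simp
  also have "\<dots> \<le> 2 ^ (2 * n + c) * bnd"
    using cardI by (intro mult_right_mono) (auto simp: bnd_def)
  finally show ?thesis by (simp add: bnd_def m_def)
qed

lemma key:
  fixes \<alpha> \<epsilon> p :: real and n :: nat
  assumes "0 < \<alpha>" "\<alpha> < \<epsilon>" "\<epsilon> < 1" "n \<ge> 2" "ln n / n \<le> p" "p \<le> 1"
  shows "1 - exp (4 * real n - \<alpha>/2 * real n * ln (real n) / (ln (real n) powr 0.49)^2)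
     \<le> measure_pmf.prob (Gc n p (nat \<lfloor>(1 + \<epsilon>) * n\<rfloor>))
            {G. \<forall>C. C \<subseteq> {1..nat \<lfloor>(1 + \<epsilon>) * n\<rfloor>} \<longrightarrow> real (card C) \<ge> (1 + \<alpha>) * n \<longrightarrow>
                  rainbow_pseudorandom n (nat \<lceil>n / ln n powr 0.49\<rceil>) (restrict_colours C G)}"
proof -
  define c where "c = nat \<lfloor>(1 + \<epsilon>) * n\<rfloor>"
  define k where "k = nat \<lceil>n / ln n powr 0.49\<rceil>"
  define m where "m = nat \<lceil>\<alpha> * n\<rceil>"
  define L where "L = ln (real n) powr 0.49"
  define good where "good = {G. \<forall>C. C \<subseteq> {1..c} \<longrightarrow> real (card C) \<ge> (1 + \<alpha>) * n \<longrightarrow>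
                  rainbow_pseudorandom n k (restrict_colours C G)}"
  have n2: "real n \<ge> 2" using assms(4) by simp
  have lnpos: "ln (real n) > 0" using n2 by simp
  have Lpos: "L > 0" unfolding L_def using lnpos by simp
  have p0: "p \<ge> ln n / n" using assms(5) .
  have ppos: "p > 0" using lnpos n2 p0 by (smt (verit) divide_pos_pos)
  have e2: "(1 + \<epsilon>) * real n \<le> 2 * real n" using assms n2 by (intro mult_right_mono) auto
  have e3: "(1 + \<epsilon>) * real n \<ge> 1 * real n" using assms n2 by (intro mult_right_mono) auto
  have cle: "real c \<le> 2 * real n" unfolding c_def using e2 e3 n2 by linarith
  have cge: "real c \<ge> 1" unfolding c_def using e2 e3 n2 by linarith
  then have c1: "c \<ge> 1" by simp
  have mge: "real m \<ge> \<alpha> * n" unfolding m_def by linarith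
  have kge: "real k \<ge> n / L" unfolding k_def L_def by linarith
  have nL: "n / L > 0" using Lpos n2 by simp
  have bad: "measure_pmf.prob (Gc n p c) (- good) \<le> 2 ^ (2 * n + c) * exp (-(p * m / c) * (k * k))"
    unfolding good_def m_def using bad_prob[where a=\<alpha> and k=k, OF _ assms(6) c1] ppos by simp
  have e1: "(2::real) ^ (2 * n + c) \<le> exp (4 * real n)"
  proof -
    have "(2::real) ^ (2 * n + c) = exp (real (2 * n + c) * ln 2)"
      by (subst exp_of_nat_mult) simp
    also have "\<dots> \<le> exp (real (2 * n + c) * 1)"
      using ln_2_less_1 by (subst exp_le_cancel_iff) (intro mult_left_mono, auto)
    also have "\<dots> \<le> exp (4 * real n)" using cle by simp
    finally show ?thesis .
  qed
  have X: "\<alpha>/2 * real n * ln (real n) / L^2 \<le> p * m / c * (k * k)"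
  proof -
    have pm: "\<alpha> * ln n \<le> p * m"
    proof -
      have "\<alpha> * ln n = (ln n / n) * (\<alpha> * n)" using n2 by simp
      also have "\<dots> \<le> p * m" using p0 mge lnpos n2 assms(1) ppos by (intro mult_mono) auto
      finally show ?thesis .
    qed
    have kk: "(n / L)^2 \<le> real k * real k"
    proof -
      have "(n / L) * (n / L) \<le> real k * real k" using kge nL by (intro mult_mono) auto
      then show ?thesis by (simp add: power2_eq_square)
    qed
    have "\<alpha>/2 * real n * ln (real n) / L^2 = (\<alpha> * ln n) * (n / L)^2 / (2 * n)"
      using n2 by (simp add: field_simps power2_eq_square)
    also have "\<dots> \<le> (p * m) * (real k * real k) / (2 * n)"
    proof (rule divide_right_mono)
      have "0 \<le> p * real m" using ppos by simp
      then show "\<alpha> * ln (real n) * (real n / L)\<^sup>2 \<le> p * real m * (real k * real k)"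
        by (rule mult_mono[OF pm kk]) simp
    qed simp
    also have "\<dots> \<le> (p * m) * (real k * real k) / c"
      using cle cge ppos by (intro divide_left_mono) auto
    finally show ?thesis by simp
  qed
  have "measure_pmf.prob (Gc n p c) (- good) \<le> exp (4 * real n) * exp (-(\<alpha>/2 * real n * ln (real n) / L^2))"
  proof -
    have "exp (-(p * m / c) * (k * k)) \<le> exp (-(\<alpha>/2 * real n * ln (real n) / L^2))"
      using X by simp
    then have "(2::real) ^ (2 * n + c) * exp (-(p * m / c) * (k * k))
        \<le> exp (4 * real n) * exp (-(\<alpha>/2 * real n * ln (real n) / L^2))"
      using e1 by (intro mult_mono) auto
    then show ?thesis using bad by linarith
  qed
  also have "\<dots> = exp (4 * real n - \<alpha>/2 * real n * ln (real n) / L^2)"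
    by (simp add: exp_diff exp_minus field_simps)
  finally have b: "measure_pmf.prob (Gc n p c) (- good) \<le> exp (4 * real n - \<alpha>/2 * real n * ln (real n) / L^2)" .
  have "measure_pmf.prob (Gc n p c) (- good) = 1 - measure_pmf.prob (Gc n p c) good"
    using measure_pmf.prob_compl[of good "Gc n p c"] by (simp add: Compl_eq_Diff_UNIV)
  then show ?thesis using b unfolding good_def c_def k_def L_def by simp
qed

theorem lemma12:
  fixes \<alpha> \<epsilon> :: real and p :: "nat \<Rightarrow> real"
  assumes "0 < \<alpha>" "\<alpha> < \<epsilon>" "\<epsilon> < 1"
    and "eventually (\<lambda>n. ln n / n \<le> p n \<and> p n \<le> 2 * ln n / n) sequentially"
  shows "(\<lambda>n. measure_pmf.prob (Gc n (p n) (nat \<lfloor>(1 + \<epsilon>) * n\<rfloor>))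
            {G. \<forall>C. C \<subseteq> {1..nat \<lfloor>(1 + \<epsilon>) * n\<rfloor>} \<longrightarrow> real (card C) \<ge> (1 + \<alpha>) * n \<longrightarrow>
                  rainbow_pseudorandom n (nat \<lceil>n / ln n powr 0.49\<rceil>) (restrict_colours C G)})
         \<longlonglongrightarrow> 1"
proof -
  define g where "g = (\<lambda>n::nat. exp (4 * real n - \<alpha>/2 * real n * ln (real n) / (ln (real n) powr 0.49)^2))"
  have g0: "g \<longlonglongrightarrow> 0" unfolding g_def using assms(1) by real_asymp
  have g1: "(\<lambda>n. 1 - g n) \<longlonglongrightarrow> 1" using tendsto_diff[OF tendsto_const g0, of 1] by simp
  have e2: "eventually (\<lambda>n::nat. 2 * ln (real n) / real n \<le> 1) sequentially" by real_asymp
  have e3: "eventually (\<lambda>n::nat. 2 \<le> n) sequentially" by (rule eventually_ge_at_top)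
  have low: "eventually (\<lambda>n. 1 - g n \<le> measure_pmf.prob (Gc n (p n) (nat \<lfloor>(1 + \<epsilon>) * n\<rfloor>))
            {G. \<forall>C. C \<subseteq> {1..nat \<lfloor>(1 + \<epsilon>) * n\<rfloor>} \<longrightarrow> real (card C) \<ge> (1 + \<alpha>) * n \<longrightarrow>
                  rainbow_pseudorandom n (nat \<lceil>n / ln n powr 0.49\<rceil>) (restrict_colours C G)}) sequentially"
    using eventually_conj[OF assms(4) eventually_conj[OF e2 e3]]
  proof (rule eventually_mono)
    fix n :: nat assume h: "(ln n / n \<le> p n \<and> p n \<le> 2 * ln n / n) \<and> 2 * ln (real n) / real n \<le> 1 \<and> 2 \<le> n"
    show "1 - g n \<le> measure_pmf.prob (Gc n (p n) (nat \<lfloor>(1 + \<epsilon>) * n\<rfloor>))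
            {G. \<forall>C. C \<subseteq> {1..nat \<lfloor>(1 + \<epsilon>) * n\<rfloor>} \<longrightarrow> real (card C) \<ge> (1 + \<alpha>) * n \<longrightarrow>
                  rainbow_pseudorandom n (nat \<lceil>n / ln n powr 0.49\<rceil>) (restrict_colours C G)}"
      unfolding g_def using h by (intro key[OF assms(1-3)]) auto
  qed
  have up: "eventually (\<lambda>n. measure_pmf.prob (Gc n (p n) (nat \<lfloor>(1 + \<epsilon>) * n\<rfloor>))
            {G. \<forall>C. C \<subseteq> {1..nat \<lfloor>(1 + \<epsilon>) * n\<rfloor>} \<longrightarrow> real (card C) \<ge> (1 + \<alpha>) * n \<longrightarrow>
                  rainbow_pseudorandom n (nat \<lceil>n / ln n powr 0.49\<rceil>) (restrict_colours C G)} \<le> 1) sequentially"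
    by (intro always_eventually allI measure_pmf.prob_le_1)
  show ?thesis by (rule tendsto_sandwich[OF low up g1 tendsto_const])
qed
end
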